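(* Let $(P,h)$ be a floor plan with $P=(p_1,\dots,p_r)$. Suppose there exists $i$ such that $x(p_i)>0$ and, for all $j$ with $x(p_j)=x(p_i)-1$, we have $y(p_j)<y(p_i)$. Let $P'=(p'_1,\dots,p'_r)$ with $p'_i=p_i-(1,0)$ and $p'_k=p_k$ for $k\neq i$. Then $(P',h)<(P,h)$, i.e. $\lambda_{(P',h)}\subsetneq\lambda_{(P,h)}$.
   Context: For $p\in\mathbb{N}^2$, $x(p)$ and $y(p)$ denote its coordinates. A floor plan is a pair $(P,h)$ of sequences $P=(p_1,\dots,p_r)$ with $p_i\in\mathbb{N}^2$ and $h=(h_1,\dots,h_r)$ with $h_i$ positive integers. A North-East path is a sequence $(q_1,\dots,q_m)$ in $\mathbb{N}^2$ with $q_{j+1}-q_j\in\{(1,0),(0,1)\}$, originating at $q_1$; its score w.r.t. $(P,h)$ is $\sum_{i:\,p_i\in\{q_1,\dots,q_m\}}h_i$, and $\max\mathrm{score}_{(P,h)}(q)$ is the maximal score of a path originating at $q$. $\lambda_{(P,h)}\subseteq\mathbb{N}^3$ is the $3$-dimensional Young diagram $\{(x,y,z): 0\le z<\max\mathrm{score}_{(P,h)}(x,y)\}$. For floor plans with the same $h$, $(P',h)\le(P,h)$ means $\lambda_{(P',h)}\subseteq\lambda_{(P,h)}$, and $<$ means $\le$ with $\lambda_{(P',h)}\ne\lambda_{(P,h)}$. *)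

theory Defs
  imports Main
begin

type_synonym point = "nat \<times> nat"

definition floor_plan :: "point list \<Rightarrow> nat list \<Rightarrow> bool" where
  "floor_plan P h \<longleftrightarrow> length h = length P \<and> (\<forall>k < length h. h ! k > 0)"

definition NE_path :: "point list \<Rightarrow> bool" where
  "NE_path qs \<longleftrightarrow> qs \<noteq> [] \<and>
     (\<forall>j. Suc j < length qs \<longrightarrow>
        qs ! Suc j = (fst (qs ! j) + 1, snd (qs ! j)) \<or>
        qs ! Suc j = (fst (qs ! j), snd (qs ! j) + 1))"

definition score :: "point list \<Rightarrow> nat list \<Rightarrow> point list \<Rightarrow> nat" where
  "score P h qs = (\<Sum>i \<in> {i. i < length P \<and> P ! i \<in> set qs}. h ! i)"

definition maxscore :: "point list \<Rightarrow> nat list \<Rightarrow> point \<Rightarrow> nat" where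
  "maxscore P h q = Max {score P h qs | qs. NE_path qs \<and> hd qs = q}"

definition young3 :: "point list \<Rightarrow> nat list \<Rightarrow> (nat \<times> nat \<times> nat) set" where
  "young3 P h = {(x, y, z). z < maxscore P h (x, y)}"

definition fp_le :: "point list \<Rightarrow> point list \<Rightarrow> nat list \<Rightarrow> bool" where
  "fp_le P' P h \<longleftrightarrow> young3 P' h \<subseteq> young3 P h"

definition fp_less :: "point list \<Rightarrow> point list \<Rightarrow> nat list \<Rightarrow> bool" where
  "fp_less P' P h \<longleftrightarrow> fp_le P' P h \<and> young3 P' h \<noteq> young3 P h"

end

theory Submission
  imports Defs
begin

definition le2 :: "point \<Rightarrow> point \<Rightarrow> bool" where
  "le2 p q \<longleftrightarrow> fst p \<le> fst q \<and> snd p \<le> snd q"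

lemma NE_path_le: "NE_path qs \<Longrightarrow> j \<le> k \<Longrightarrow> k < length qs \<Longrightarrow> le2 (qs!j) (qs!k)"
proof (induction k)
  case 0
  then show ?case by (simp add: le2_def)
next
  case (Suc k)
  show ?case
  proof (cases "j = Suc k")
    case True
    then show ?thesis by (simp add: le2_def)
  next
    case False
    then have "le2 (qs!j) (qs!k)" using Suc by simp
    moreover have "le2 (qs!k) (qs!Suc k)" using Suc.prems unfolding NE_path_def le2_def
      by (metis fst_conv le_add1 order_refl snd_conv)
    ultimately show ?thesis by (auto simp: le2_def)
  qed
qed

lemma NE_path_chain: "NE_path qs \<Longrightarrow> c \<in> set qs \<Longrightarrow> d \<in> set qs \<Longrightarrow> le2 c d \<or> le2 d c"
  by (metis NE_path_le in_set_conv_nth nat_le_linear)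

lemma NE_path_ge_hd: "NE_path qs \<Longrightarrow> c \<in> set qs \<Longrightarrow> le2 (hd qs) c"
  by (metis NE_path_def NE_path_le hd_conv_nth in_set_conv_nth le0)

lemma NE_path_Cons:
  assumes "NE_path xs" "hd xs = (fst q+1, snd q) \<or> hd xs = (fst q, snd q+1)"
  shows "NE_path (q # xs)"
  unfolding NE_path_def
proof (intro conjI allI impI)
  fix j assume j: "Suc j < length (q # xs)"
  show "(q # xs) ! Suc j = (fst ((q # xs) ! j) + 1, snd ((q # xs) ! j)) \<or>
        (q # xs) ! Suc j = (fst ((q # xs) ! j), snd ((q # xs) ! j) + 1)"
  proof (cases j)
    case 0
    then show ?thesis using assms by (simp add: hd_conv_nth NE_path_def)
  next
    case (Suc j')
    then show ?thesis using assms(1) j unfolding NE_path_def by simp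
  qed
qed simp

lemma NE_path_single: "NE_path [q]"
  by (simp add: NE_path_def)

lemma path_exists_aux:
  "card C + (\<Sum>c\<in>C. (fst c - fst q) + (snd c - snd q)) = n \<Longrightarrow> finite C \<Longrightarrow>
   \<forall>c\<in>C. le2 q c \<Longrightarrow> \<forall>c\<in>C. \<forall>d\<in>C. le2 c d \<or> le2 d c \<Longrightarrow>
   \<exists>qs. NE_path qs \<and> hd qs = q \<and> C \<subseteq> set qs"
proof (induction n arbitrary: C q rule: less_induct)
  case (less n)
  show ?case
  proof (cases "C = {}")
    case True
    then show ?thesis using NE_path_single[of q] by (intro exI[of _ "[q]"]) simp
  next
    case Cne: False
    show ?thesis
    proof (cases "q \<in> C")
      case True
      let ?C = "C - {q}"
      have "card ?C < card C" using True less.prems(2) by (rule card_Diff1_less[rotated])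
      moreover have "(\<Sum>c\<in>?C. (fst c - fst q) + (snd c - snd q)) \<le> (\<Sum>c\<in>C. (fst c - fst q) + (snd c - snd q))"
        using less.prems(2) by (intro sum_mono2) auto
      ultimately obtain qs where "NE_path qs" "hd qs = q" "?C \<subseteq> set qs"
        using less.IH[of _ ?C q] less.prems by fastforce
      moreover have "q \<in> set qs" using \<open>NE_path qs\<close> \<open>hd qs = q\<close> by (metis NE_path_def hd_in_set)
      ultimately show ?thesis by blast
    next
      case qnot: False
      have key: "\<exists>q1. (q1 = (fst q+1, snd q) \<or> q1 = (fst q, snd q+1)) \<and>
                 (\<forall>c\<in>C. le2 q1 c \<and> (fst c - fst q1) + (snd c - snd q1) < (fst c - fst q) + (snd c - snd q))"
      proof (cases "\<forall>c\<in>C. fst q < fst c")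
        case True
        have "\<forall>c\<in>C. le2 (fst q+1, snd q) c \<and> (fst c - fst (fst q+1, snd q)) + (snd c - snd (fst q+1, snd q)) < (fst c - fst q) + (snd c - snd q)"
        proof
          fix c assume "c \<in> C"
          then have "fst q \<le> fst c" "snd q \<le> snd c" using less.prems(3) by (auto simp: le2_def)
          moreover have "fst q < fst c \<or> snd q < snd c" using \<open>c \<in> C\<close> True by auto
          ultimately show "le2 (fst q+1, snd q) c \<and> (fst c - fst (fst q+1, snd q)) + (snd c - snd (fst q+1, snd q)) < (fst c - fst q) + (snd c - snd q)"
            using \<open>c \<in> C\<close> True unfolding le2_def by auto
        qed
        then show ?thesis by blast
      next
        case False
        then obtain c0 where c0: "c0 \<in> C" "fst c0 \<le> fst q" by auto
        have "fst c0 = fst q" "snd q \<le> snd c0" using c0 less.prems(3) by (auto simp: le2_def)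
        then have "snd q < snd c0" using c0 qnot by (metis le_neq_implies_less prod.collapse)
        have "\<forall>c\<in>C. snd q < snd c"
        proof
          fix c assume "c \<in> C"
          then have "le2 c c0 \<or> le2 c0 c" "le2 q c" using less.prems(3,4) c0 by auto
          then show "snd q < snd c"
            using \<open>fst c0 = fst q\<close> \<open>snd q < snd c0\<close> qnot \<open>c \<in> C\<close> unfolding le2_def
            by (metis le_antisym le_neq_implies_less order.strict_trans2 prod.collapse)
        qed
        have "\<forall>c\<in>C. le2 (fst q, snd q+1) c \<and> (fst c - fst (fst q, snd q+1)) + (snd c - snd (fst q, snd q+1)) < (fst c - fst q) + (snd c - snd q)"
        proof
          fix c assume "c \<in> C"
          then have "fst q \<le> fst c" "snd q \<le> snd c" using less.prems(3) by (auto simp: le2_def)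
          moreover have "fst q < fst c \<or> snd q < snd c" using \<open>c \<in> C\<close> \<open>\<forall>c\<in>C. snd q < snd c\<close> by auto
          ultimately show "le2 (fst q, snd q+1) c \<and> (fst c - fst (fst q, snd q+1)) + (snd c - snd (fst q, snd q+1)) < (fst c - fst q) + (snd c - snd q)"
            using \<open>c \<in> C\<close> \<open>\<forall>c\<in>C. snd q < snd c\<close> unfolding le2_def by auto
        qed
        then show ?thesis by blast
      qed
      then obtain q1 where q1: "q1 = (fst q+1, snd q) \<or> q1 = (fst q, snd q+1)"
        "\<forall>c\<in>C. le2 q1 c \<and> (fst c - fst q1) + (snd c - snd q1) < (fst c - fst q) + (snd c - snd q)"
        by blast
      have "(\<Sum>c\<in>C. (fst c - fst q1) + (snd c - snd q1)) < (\<Sum>c\<in>C. (fst c - fst q) + (snd c - snd q))"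
        using q1(2) less.prems(2) Cne by (intro sum_strict_mono) auto
      then obtain xs where xs: "NE_path xs" "hd xs = q1" "C \<subseteq> set xs"
        using less.IH[of _ C q1] less.prems q1(2) by fastforce
      have "NE_path (q # xs)" using xs q1(1) NE_path_Cons by auto
      then show ?thesis using xs by (intro exI[of _ "q # xs"]) auto
    qed
  qed
qed

lemma path_exists:
  "finite C \<Longrightarrow> \<forall>c\<in>C. le2 q c \<Longrightarrow> \<forall>c\<in>C. \<forall>d\<in>C. le2 c d \<or> le2 d c \<Longrightarrow>
   \<exists>qs. NE_path qs \<and> hd qs = q \<and> C \<subseteq> set qs"
  using path_exists_aux by blast

lemma score_bound: "score P h qs \<le> (\<Sum>i\<in>{i. i < length P}. h ! i)"
  unfolding score_def by (intro sum_mono2) auto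

lemma scores_finite: "finite {score P h qs | qs. NE_path qs \<and> hd qs = q}"
  by (rule finite_subset[of _ "{..(\<Sum>i\<in>{i. i < length P}. h ! i)}"]) (auto intro: score_bound)

lemma maxscore_ge: "NE_path qs \<Longrightarrow> hd qs = q \<Longrightarrow> score P h qs \<le> maxscore P h q"
  unfolding maxscore_def by (rule Max_ge[OF scores_finite]) blast

lemma maxscore_attained: "\<exists>qs. NE_path qs \<and> hd qs = q \<and> maxscore P h q = score P h qs"
proof -
  have "score P h [q] \<in> {score P h qs | qs. NE_path qs \<and> hd qs = q}" using NE_path_single[of q] by auto
  then have "{score P h qs | qs. NE_path qs \<and> hd qs = q} \<noteq> {}" by blast
  from Max_in[OF scores_finite this] show ?thesis unfolding maxscore_def by blast
qed

lemma idx_sub: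
  assumes "\<And>k. k \<noteq> i \<Longrightarrow> P' ! k = P ! k" "length P' = length P" "P' ! i \<notin> S"
  shows "{k. k < length P' \<and> P' ! k \<in> S} \<subseteq> {k. k < length P \<and> P ! k \<in> S} - {i}"
proof
  fix k assume k: "k \<in> {k. k < length P' \<and> P' ! k \<in> S}"
  then have "k \<noteq> i" using assms(3) by auto
  then show "k \<in> {k. k < length P \<and> P ! k \<in> S} - {i}" using k assms(1,2) by auto
qed

theorem lemma5p1:
  fixes P :: "point list" and h :: "nat list" and i :: nat
  assumes "floor_plan P h"
    and "i < length P"
    and "fst (P ! i) > 0"
    and "\<forall>j < length P. fst (P ! j) = fst (P ! i) - 1 \<longrightarrow> snd (P ! j) < snd (P ! i)"
  shows "fp_less (P[i := (fst (P ! i) - 1, snd (P ! i))]) P h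
         \<and> young3 (P[i := (fst (P ! i) - 1, snd (P ! i))]) h \<subset> young3 P h"
proof -
  define a where "a = P ! i"
  define a' where "a' = (fst a - 1, snd a)"
  define P' where "P' = P[i := a']"
  have lenP': "length P' = length P" by (simp add: P'_def)
  have P'i: "P' ! i = a'" using assms(2) by (simp add: P'_def)
  have P'k: "\<And>k. k \<noteq> i \<Longrightarrow> P' ! k = P ! k" by (simp add: P'_def)
  have hpos: "h ! i > 0" using assms(1,2) by (simp add: floor_plan_def)
  have incl: "maxscore P' h q \<le> maxscore P h q" for q
  proof -
    obtain Q where Q: "NE_path Q" "hd Q = q" "maxscore P' h q = score P' h Q"
      using maxscore_attained by blast
    show ?thesis
    proof (cases "a' \<in> set Q")
      case False
      have "score P' h Q \<le> score P h Q" unfolding score_def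
        using idx_sub[of i P' P "set Q"] False P'i P'k lenP' by (intro sum_mono2) auto
      then show ?thesis using Q maxscore_ge[of Q q P h] by simp
    next
      case True
      define C where "C = insert a {P ! k | k. k < length P \<and> k \<noteq> i \<and> P ! k \<in> set Q}"
      have fin: "finite C"
      proof -
        have "{P ! k | k. k < length P \<and> k \<noteq> i \<and> P ! k \<in> set Q} \<subseteq> set Q" by auto
        then show ?thesis unfolding C_def by (simp add: finite_subset)
      qed
      have aa': "le2 a' a" by (simp add: a'_def le2_def)
      have a_ge: "le2 c a \<or> le2 a c" if cin: "c \<in> {P ! k | k. k < length P \<and> k \<noteq> i \<and> P ! k \<in> set Q}" for c
      proof -
        obtain k where k: "k < length P" "k \<noteq> i" "P ! k \<in> set Q" "c = P ! k" using cin by blast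
        have "le2 c a' \<or> le2 a' c" using NE_path_chain[OF Q(1) True] k by blast
        then show ?thesis
        proof
          assume "le2 c a'" then show ?thesis using aa' by (auto simp: le2_def)
        next
          assume h1: "le2 a' c"
          have "fst c \<noteq> fst a - 1 \<or> snd c < snd a" using assms(4) k a_def by auto
          then show ?thesis using h1 unfolding le2_def a'_def by auto
        qed
      qed
      have chain: "\<forall>c\<in>C. \<forall>d\<in>C. le2 c d \<or> le2 d c"
      proof (intro ballI)
        fix c d assume c: "c \<in> C" and d: "d \<in> C"
        show "le2 c d \<or> le2 d c"
        proof (cases "c = a \<or> d = a")
          case True
          have aa: "le2 a a" by (simp add: le2_def)
          have "c = a \<or> c \<in> {P ! k | k. k < length P \<and> k \<noteq> i \<and> P ! k \<in> set Q}"
               "d = a \<or> d \<in> {P ! k | k. k < length P \<and> k \<noteq> i \<and> P ! k \<in> set Q}"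
            using c d unfolding C_def by auto
          then show ?thesis
          proof (elim disjE)
            assume "c = a" "d = a" then show ?thesis using aa by simp
          next
            assume "c = a" "d \<in> {P ! k | k. k < length P \<and> k \<noteq> i \<and> P ! k \<in> set Q}"
            then show ?thesis using a_ge[of d] by blast
          next
            assume "c \<in> {P ! k | k. k < length P \<and> k \<noteq> i \<and> P ! k \<in> set Q}" "d = a"
            then show ?thesis using a_ge[of c] by blast
          next
            assume "c \<in> {P ! k | k. k < length P \<and> k \<noteq> i \<and> P ! k \<in> set Q}"
              "d \<in> {P ! k | k. k < length P \<and> k \<noteq> i \<and> P ! k \<in> set Q}"
            then show ?thesis using True a_ge by blast
          qed
        next
          case False
          then have "c \<in> set Q" "d \<in> set Q" using c d unfolding C_def by auto
          then show ?thesis using NE_path_chain[OF Q(1)] by blast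
        qed
      qed
      have ge: "\<forall>c\<in>C. le2 q c"
      proof -
        have "le2 q a'" using NE_path_ge_hd[OF Q(1) True] Q(2) by simp
        then have "le2 q a" using aa' by (auto simp: le2_def)
        then show ?thesis unfolding C_def using NE_path_ge_hd[OF Q(1)] Q(2) by blast
      qed
      obtain Q2 where Q2: "NE_path Q2" "hd Q2 = q" "C \<subseteq> set Q2"
        using path_exists[OF fin ge chain] by blast
      have "score P' h Q \<le> score P h Q2" unfolding score_def
      proof (intro sum_mono2)
        show "{ia. ia < length P' \<and> P' ! ia \<in> set Q} \<subseteq> {i. i < length P \<and> P ! i \<in> set Q2}"
        proof
          fix k assume "k \<in> {ia. ia < length P' \<and> P' ! ia \<in> set Q}"
          then have k: "k < length P" "P' ! k \<in> set Q" using lenP' by auto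
          show "k \<in> {i. i < length P \<and> P ! i \<in> set Q2}"
          proof (cases "k = i")
            case True
            then show ?thesis using k Q2(3) a_def C_def by auto
          next
            case False
            then have "P ! k \<in> C" using k P'k unfolding C_def by auto
            then show ?thesis using k Q2(3) by auto
          qed
        qed
      qed auto
      then show ?thesis using Q maxscore_ge[OF Q2(1,2), of P h] by simp
    qed
  qed
  have strict: "maxscore P' h a < maxscore P h a"
  proof -
    obtain Q where Q: "NE_path Q" "hd Q = a" "maxscore P' h a = score P' h Q"
      using maxscore_attained by blast
    have notin: "a' \<notin> set Q"
    proof
      assume "a' \<in> set Q"
      then have "le2 a a'" using NE_path_ge_hd[OF Q(1)] Q(2) by simp
      then show False using assms(3) a_def by (simp add: le2_def a'_def)
    qed
    have ain: "a \<in> set Q" using Q by (metis NE_path_def hd_in_set)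
    let ?I = "{k. k < length P \<and> P ! k \<in> set Q}"
    have fI: "finite ?I" by simp
    have iI: "i \<in> ?I" using ain assms(2) a_def by simp
    have "score P' h Q \<le> (\<Sum>k\<in>?I - {i}. h ! k)" unfolding score_def
      using idx_sub[of i P' P "set Q"] notin P'i P'k lenP' by (intro sum_mono2) auto
    also have "\<dots> < (\<Sum>k\<in>?I. h ! k)"
      using sum.remove[OF fI iI, of "\<lambda>k. h ! k"] hpos by simp
    also have "\<dots> = score P h Q" by (simp add: score_def)
    also have "\<dots> \<le> maxscore P h a" using maxscore_ge[OF Q(1,2)] .
    finally show ?thesis using Q by simp
  qed
  have sub: "young3 P' h \<subseteq> young3 P h"
    unfolding young3_def using incl by (auto intro: less_le_trans)
  have "(fst a, snd a, maxscore P' h a) \<in> young3 P h - young3 P' h"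
    using strict by (simp add: young3_def)
  then have ne: "young3 P' h \<noteq> young3 P h" by auto
  have eq: "(fst (P ! i) - 1, snd (P ! i)) = a'" by (simp add: a'_def a_def)
  show ?thesis unfolding eq P'_def[symmetric] fp_less_def fp_le_def using sub ne by auto
qed

end
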